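(* For a weighted cycle $\mathcal{C}_N$ with $N$ odd, \[ h(k)+\overline{h}(k)=1\quad\text{for }2\leq k\leq N. \]
   Context: A weighted cycle $\mathcal{C}_N$ ($N\geq3$) has vertices $v_1,\ldots,v_N$ and edges exactly $\{v_i,v_{i+1}\}$ (indices mod $N$), each with positive symmetric weight $w_{uv}$ ($w_{uv}=0$ for non-edges). $d_u=\sum_vw_{uv}$, $|E(A,B)|:=\sum_{u\in A,v\in B}w_{uv}$, $\mathrm{vol}(A)=\sum_{u\in A}d_u$, $\overline{A}$ the complement. For nonempty $S$, $\phi(S)=|E(S,\overline{S})|/\mathrm{vol}(S)$; $h(k):=\min\max_{1\leq i\leq k}\phi(S_i)$ over all collections of $k$ nonempty pairwise disjoint vertex subsets. For disjoint $V_1,V_2$ with $V_1\cup V_2\neq\emptyset$, $\overline{\phi}(V_1,V_2)=2|E(V_1,V_2)|/\mathrm{vol}(V_1\cup V_2)$; $\overline{h}(k):=\max\min_{1\leq i\leq k}\overline{\phi}(V_{2i-1},V_{2i})$ over all collections of $k$ pairs $(V_1,V_2),\ldots,(V_{2k-1},V_{2k})$ of pairwise disjoint vertex subsets with $V_{2i-1}\cup V_{2i}\neq\emptyset$ for each $i$. *)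

theory Defs
  imports Complex_Main
begin

text \<open>Weighted graphs on the vertex set {0..<N} (vertex v_i is i-1),
  given by a symmetric weight function W (W u v = 0 for non-edges).\<close>

definition cycle_weight :: "nat \<Rightarrow> (nat \<Rightarrow> real) \<Rightarrow> nat \<Rightarrow> nat \<Rightarrow> real" where
  "cycle_weight N w u v =
     (if u < N \<and> v < N \<and> v = (u + 1) mod N then w u
      else if u < N \<and> v < N \<and> u = (v + 1) mod N then w v
      else 0)"

definition deg :: "nat \<Rightarrow> (nat \<Rightarrow> nat \<Rightarrow> real) \<Rightarrow> nat \<Rightarrow> real" where
  "deg N W u = (\<Sum>v\<in>{0..<N}. W u v)"

definition cut :: "(nat \<Rightarrow> nat \<Rightarrow> real) \<Rightarrow> nat set \<Rightarrow> nat set \<Rightarrow> real" where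
  "cut W A B = (\<Sum>u\<in>A. \<Sum>v\<in>B. W u v)"

definition vol :: "nat \<Rightarrow> (nat \<Rightarrow> nat \<Rightarrow> real) \<Rightarrow> nat set \<Rightarrow> real" where
  "vol N W A = (\<Sum>u\<in>A. deg N W u)"

definition expansion :: "nat \<Rightarrow> (nat \<Rightarrow> nat \<Rightarrow> real) \<Rightarrow> nat set \<Rightarrow> real" where
  "expansion N W S = cut W S ({0..<N} - S) / vol N W S"

definition bipart_ratio :: "nat \<Rightarrow> (nat \<Rightarrow> nat \<Rightarrow> real) \<Rightarrow> nat set \<Rightarrow> nat set \<Rightarrow> real" where
  "bipart_ratio N W V1 V2 = 2 * cut W V1 V2 / vol N W (V1 \<union> V2)"

definition multiway_const :: "nat \<Rightarrow> (nat \<Rightarrow> nat \<Rightarrow> real) \<Rightarrow> nat \<Rightarrow> real" where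
  "multiway_const N W k = Min {Max {expansion N W (S i) | i. i < k} | S.
      (\<forall>i<k. S i \<subseteq> {0..<N} \<and> S i \<noteq> {}) \<and>
      (\<forall>i<k. \<forall>j<k. i \<noteq> j \<longrightarrow> S i \<inter> S j = {})}"

definition dual_multiway_const :: "nat \<Rightarrow> (nat \<Rightarrow> nat \<Rightarrow> real) \<Rightarrow> nat \<Rightarrow> real" where
  "dual_multiway_const N W k = Max {Min {bipart_ratio N W (V (2*i)) (V (2*i+1)) | i. i < k} | V.
      (\<forall>i<2*k. V i \<subseteq> {0..<N}) \<and>
      (\<forall>i<2*k. \<forall>j<2*k. i \<noteq> j \<longrightarrow> V i \<inter> V j = {}) \<and>
      (\<forall>i<k. V (2*i) \<union> V (2*i+1) \<noteq> {})}"

end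

theory Submission
  imports Defs "HOL-Library.FuncSet"
begin

lemma adj_false:
  assumes "(N::nat) \<ge> 3" "u < N" "v = (u+1) mod N" "u = (v+1) mod N"
  shows False
proof (cases "u + 1 < N")
  case True
  then have v: "v = u+1" using assms(3) by simp
  then have u: "u = (u+2) mod N" using assms(4) by simp
  show False
  proof (cases "u + 2 < N")
    case True
    then show False using u by simp
  next
    case False
    then have "u + 2 = N" using \<open>u+1<N\<close> by simp
    then show False using u assms(1) by simp
  qed
next
  case False
  then have "u = N - 1" using assms(2) by simp
  then have "v = 0" using assms(3) assms(1) by simp
  then show False using assms(4) assms(1) \<open>u = N - 1\<close> by simp
qed

lemma cw_sym:
  assumes "N \<ge> 3" shows "cycle_weight N w u v = cycle_weight N w v u"
proof -
  have n: "\<not> (v = (u+1) mod N \<and> u = (v+1) mod N)" if "u < N" for u v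
    using adj_false[OF assms that] by blast
  show ?thesis
  proof (cases "u < N \<and> v < N \<and> v = (u + 1) mod N")
    case True
    then have "\<not> (u = (v+1) mod N)" using n by blast
    then show ?thesis using True unfolding cycle_weight_def by simp
  next
    case False
    then show ?thesis unfolding cycle_weight_def by auto
  qed
qed

lemma cw_nonneg: "(\<And>i. i < N \<Longrightarrow> w i > 0) \<Longrightarrow> cycle_weight N w u v \<ge> 0"
  unfolding cycle_weight_def by (auto intro: less_imp_le)

lemma cw_nz: "cycle_weight N w u v \<noteq> 0 \<Longrightarrow> u < N \<and> v < N \<and> (v = (u+1) mod N \<or> u = (v+1) mod N)"
  unfolding cycle_weight_def by (auto split: if_splits)

lemma deg_pos:
  assumes "N \<ge> 3" "\<And>i. i < N \<Longrightarrow> w i > 0" "u < N"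
  shows "deg N (cycle_weight N w) u > 0"
proof -
  have e: "cycle_weight N w u ((u+1) mod N) = w u"
    using assms by (simp add: cycle_weight_def)
  have "cycle_weight N w u ((u+1) mod N) \<le> deg N (cycle_weight N w) u"
    unfolding deg_def
    by (rule member_le_sum) (use assms in \<open>auto intro: cw_nonneg\<close>)
  then show ?thesis using e assms(2)[OF assms(3)] by linarith
qed

lemma vol_pos:
  assumes "N \<ge> 3" "\<And>i. i < N \<Longrightarrow> w i > 0" "S \<subseteq> {0..<N}" "S \<noteq> {}"
  shows "vol N (cycle_weight N w) S > 0"
  unfolding vol_def
  by (rule sum_pos) (use assms finite_subset in \<open>auto intro!: deg_pos\<close>)

lemma vol_split:
  assumes "S \<subseteq> {0..<N}"
  shows "vol N W S = cut W S S + cut W S ({0..<N} - S)"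
proof -
  have "vol N W S = (\<Sum>u\<in>S. (\<Sum>v\<in>S. W u v) + (\<Sum>v\<in>{0..<N} - S. W u v))"
    unfolding vol_def deg_def
    by (rule sum.cong) (use assms in \<open>auto simp: sum.subset_diff[of S "{0..<N}"]\<close>)
  then show ?thesis by (simp add: cut_def sum.distrib)
qed

lemma cut_union:
  assumes "A \<inter> B = {}" "finite A" "finite B"
  shows "cut W (A \<union> B) (A \<union> B) = cut W A A + cut W A B + cut W B A + cut W B B"
  using assms by (simp add: cut_def sum.union_disjoint sum.distrib)

lemma cut_swap:
  assumes "\<And>u v. W u v = W v u"
  shows "cut W A B = cut W B A"
  unfolding cut_def using assms by (subst sum.swap) simp

lemma cut_nonneg: "(\<And>u v. W u v \<ge> 0) \<Longrightarrow> cut W A B \<ge> 0"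
  unfolding cut_def by (intro sum_nonneg) auto

lemma expansion_eq:
  assumes "N \<ge> 3" "\<And>i. i < N \<Longrightarrow> w i > 0" "S \<subseteq> {0..<N}" "S \<noteq> {}"
  shows "expansion N (cycle_weight N w) S
     = 1 - cut (cycle_weight N w) S S / vol N (cycle_weight N w) S"
proof -
  have p: "vol N (cycle_weight N w) S > 0" using vol_pos assms by blast
  show ?thesis unfolding expansion_def using vol_split[OF assms(3), of "cycle_weight N w"] p
    by (simp add: field_simps)
qed

lemma bip_le:
  assumes "N \<ge> 3" "\<And>i. i < N \<Longrightarrow> w i > 0" "V1 \<inter> V2 = {}" "V1 \<union> V2 \<subseteq> {0..<N}" "V1 \<union> V2 \<noteq> {}"
  shows "bipart_ratio N (cycle_weight N w) V1 V2 \<le> 1 - expansion N (cycle_weight N w) (V1 \<union> V2)"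
proof -
  let ?W = "cycle_weight N w"
  have f1: "finite V1" "finite V2" using assms(4) finite_subset by auto
  have p: "vol N ?W (V1 \<union> V2) > 0" using vol_pos assms by blast
  have c: "cut ?W (V1 \<union> V2) (V1 \<union> V2) = cut ?W V1 V1 + 2 * cut ?W V1 V2 + cut ?W V2 V2"
    using cut_union[OF assms(3) f1, of ?W] cut_swap[of ?W V2 V1] cw_sym[OF assms(1)] by simp
  have n: "cut ?W V1 V1 \<ge> 0" "cut ?W V2 V2 \<ge> 0" using cut_nonneg cw_nonneg assms(2) by blast+
  have "2 * cut ?W V1 V2 / vol N ?W (V1 \<union> V2) \<le> cut ?W (V1 \<union> V2) (V1 \<union> V2) / vol N ?W (V1 \<union> V2)"
    using p c n by (intro divide_right_mono) auto
  then show ?thesis unfolding bipart_ratio_def using expansion_eq[OF assms(1,2,4,5)] by simp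
qed

definition pp :: "nat \<Rightarrow> nat \<Rightarrow> nat \<Rightarrow> nat" where
  "pp N m x = (if m \<le> x then x - m else x + N - m)"

lemma adj_par:
  assumes "u < N" "m < N" "u \<noteq> m" "(u+1) mod N \<noteq> m"
  shows "even (pp N m u) \<noteq> even (pp N m ((u+1) mod N))"
proof (cases "u + 1 < N")
  case True
  then have "(u+1) mod N = u+1" by simp
  then show ?thesis using assms True unfolding pp_def by auto
next
  case False
  then have u: "u = N - 1" using assms by simp
  then have "(u+1) mod N = 0" using assms by simp
  then show ?thesis using assms u unfolding pp_def by auto
qed

lemma cut_zero:
  assumes "\<And>u v. u \<in> A \<Longrightarrow> v \<in> A \<Longrightarrow> W u v = 0"
  shows "cut W A A = 0"
  unfolding cut_def using assms by simp

lemma same_col_zero: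
  assumes "u \<in> S" "v \<in> S" "m \<notin> S" "m < N" "even (pp N m u) = even (pp N m v)"
  shows "cycle_weight N w u v = 0"
proof (rule ccontr)
  assume "cycle_weight N w u v \<noteq> 0"
  then have h: "u < N" "v < N" "v = (u+1) mod N \<or> u = (v+1) mod N" using cw_nz by blast+
  have "u \<noteq> m" "v \<noteq> m" using assms by auto
  then show False using h adj_par[of u N m] adj_par[of v N m] assms by auto
qed

lemma bip_eq:
  assumes "N \<ge> 3" "\<And>i. i < N \<Longrightarrow> w i > 0" "S \<subseteq> {0..<N}" "S \<noteq> {}" "m < N" "m \<notin> S"
  shows "bipart_ratio N (cycle_weight N w) (S \<inter> {x. even (pp N m x)}) (S - {x. even (pp N m x)})
     = 1 - expansion N (cycle_weight N w) S"
proof -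
  let ?W = "cycle_weight N w"
  let ?C = "{x. even (pp N m x)}"
  let ?V1 = "S \<inter> ?C" and ?V2 = "S - ?C"
  have u: "?V1 \<union> ?V2 = S" by auto
  have d: "?V1 \<inter> ?V2 = {}" by auto
  have f1: "finite ?V1" "finite ?V2" using assms(3) finite_subset by auto
  have c: "cut ?W S S = cut ?W ?V1 ?V1 + 2 * cut ?W ?V1 ?V2 + cut ?W ?V2 ?V2"
    using cut_union[OF d f1, of ?W] cut_swap[of ?W ?V2 ?V1] cw_sym[OF assms(1)] u by simp
  have z1: "cut ?W ?V1 ?V1 = 0"
    by (rule cut_zero) (use assms in \<open>auto intro: same_col_zero\<close>)
  have z2: "cut ?W ?V2 ?V2 = 0"
    by (rule cut_zero) (use assms in \<open>auto intro: same_col_zero\<close>)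
  show ?thesis unfolding bipart_ratio_def using expansion_eq[OF assms(1-4)] c z1 z2 u by simp
qed

lemma fin_funs:
  assumes "finite X" "\<And>S. P S \<Longrightarrow> \<forall>i<(m::nat). S i \<subseteq> X"
    "\<And>S S'. (\<forall>i<m. S i = S' i) \<Longrightarrow> F S = F S'"
  shows "finite {F S | S. P S}"
proof (rule finite_subset)
  show "{F S | S. P S} \<subseteq> F ` (PiE {..<m} (\<lambda>_. Pow X))"
  proof
    fix x assume "x \<in> {F S | S. P S}"
    then obtain S where x: "x = F S" "P S" by blast
    have "restrict S {..<m} \<in> PiE {..<m} (\<lambda>_. Pow X)" using assms(2)[OF x(2)] by auto
    moreover have "F S = F (restrict S {..<m})" by (rule assms(3)) simp
    ultimately show "x \<in> F ` (PiE {..<m} (\<lambda>_. Pow X))" using x by blast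
  qed
  show "finite (F ` (PiE {..<m} (\<lambda>_. Pow X)))" using assms(1) by (intro finite_imageI finite_PiE) auto
qed

lemma cmp_img: "{f i | i. i < (k::nat)} = f ` {..<k}" by auto

lemma minmax:
  fixes f :: "nat \<Rightarrow> real"
  assumes "finite I" "I \<noteq> {}"
  shows "Min ((\<lambda>i. 1 - f i) ` I) = 1 - Max (f ` I)"
proof -
  have "Max (f ` I) \<in> f ` I" using assms by (intro Max_in) auto
  then obtain i0 where i0: "i0 \<in> I" "Max (f ` I) = f i0" by auto
  have le: "f i \<le> f i0" if "i \<in> I" for i using i0 assms that by (metis Max_ge finite_imageI imageI)
  show ?thesis using i0 le assms by (intro Min_eqI) auto
qed

theorem proposition7p2:
  fixes N k :: nat and w :: "nat \<Rightarrow> real"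
  assumes "N \<ge> 3" and "odd N"
    and "\<And>i. i < N \<Longrightarrow> w i > 0"
    and "2 \<le> k" and "k \<le> N"
  shows "multiway_const N (cycle_weight N w) k + dual_multiway_const N (cycle_weight N w) k = 1"
proof -
  let ?W = "cycle_weight N w"
  define PS where "PS S \<longleftrightarrow> (\<forall>i<k. S i \<subseteq> {0..<N} \<and> S i \<noteq> {}) \<and>
      (\<forall>i<k. \<forall>j<k. i \<noteq> j \<longrightarrow> S i \<inter> S j = {})" for S :: "nat \<Rightarrow> nat set"
  define PV where "PV V \<longleftrightarrow> (\<forall>i<2*k. V i \<subseteq> {0..<N}) \<and>
      (\<forall>i<2*k. \<forall>j<2*k. i \<noteq> j \<longrightarrow> V i \<inter> V j = {}) \<and>
      (\<forall>i<k. V (2*i) \<union> V (2*i+1) \<noteq> {})" for V :: "nat \<Rightarrow> nat set"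
  define FS where "FS S = Max {expansion N ?W (S i) | i. i < k}" for S
  define FV where "FV V = Min {bipart_ratio N ?W (V (2*i)) (V (2*i+1)) | i. i < k}" for V
  define A where "A = {FS S | S. PS S}"
  define B where "B = {FV V | V. PV V}"
  have mA: "multiway_const N ?W k = Min A"
    unfolding multiway_const_def A_def FS_def PS_def by simp
  have mB: "dual_multiway_const N ?W k = Max B"
    unfolding dual_multiway_const_def B_def FV_def PV_def by simp
  have "0 \<in> {..<k}" using assms(4) by simp
  then have kI: "finite {..<k}" "{..<k} \<noteq> {}" by auto
  have finA: "finite A" unfolding A_def
    by (rule fin_funs[of "{0..<N}" _ k]) (auto simp: PS_def FS_def cmp_img)
  have finB: "finite B" unfolding B_def
  proof (rule fin_funs[of "{0..<N}" _ "2*k"])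
    fix V V' :: "nat \<Rightarrow> nat set" assume h: "\<forall>i<2*k. V i = V' i"
    have "\<forall>i<k. V (2*i) = V' (2*i) \<and> V (2*i+1) = V' (2*i+1)" using h by auto
    then show "FV V = FV V'" unfolding FV_def cmp_img by (intro arg_cong[where f=Min] image_cong) auto
  qed (auto simp: PV_def)
  have Ane: "A \<noteq> {}"
  proof -
    have "PS (\<lambda>i. {i})" unfolding PS_def using assms(5) by auto
    then show ?thesis unfolding A_def by blast
  qed
  have h1: "1 - x \<in> B" if xA: "x \<in> A" for x
  proof -
    obtain S where S: "x = FS S" "PS S" using xA unfolding A_def by blast
    have ex: "\<exists>m. m < N \<and> m \<notin> S i" if "i < k" for i
    proof -
      define j where "j = (if i = 0 then 1 else 0::nat)"
      have j: "j < k" "j \<noteq> i" unfolding j_def using assms(4) by auto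
      obtain m where "m \<in> S j" using S(2) j unfolding PS_def by blast
      moreover have "S i \<inter> S j = {}" using S(2) j that unfolding PS_def by blast
      moreover have "S j \<subseteq> {0..<N}" using S(2) j unfolding PS_def by auto
      then have "m < N" using \<open>m \<in> S j\<close> by auto
      ultimately show ?thesis by blast
    qed
    define m where "m i = (SOME m. m < N \<and> m \<notin> S i)" for i
    have m: "m i < N" "m i \<notin> S i" if "i < k" for i
      using someI_ex[OF ex[OF that]] unfolding m_def by auto
    define C where "C i = {x. even (pp N (m i) x)}" for i
    define V where "V j = (if j < 2*k then (if even j then S (j div 2) \<inter> C (j div 2)
        else S (j div 2) - C (j div 2)) else {})" for j
    have V2: "V (2*i) = S i \<inter> C i" "V (2*i+1) = S i - C i" if "i < k" for i
      using that unfolding V_def by auto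
    have PV: "PV V"
      unfolding PV_def
    proof (intro conjI allI impI)
      fix i assume "i < 2*k"
      then have "i div 2 < k" by auto
      then have "S (i div 2) \<subseteq> {0..<N}" using S(2) unfolding PS_def by blast
      then show "V i \<subseteq> {0..<N}" unfolding V_def by auto
    next
      fix i j assume ij: "i < 2*k" "j < 2*k" "i \<noteq> j"
      show "V i \<inter> V j = {}"
      proof (cases "i div 2 = j div 2")
        case True
        then have "even i \<noteq> even j" using ij
          by (metis div_mult_mod_eq odd_iff_mod_2_eq_one even_iff_mod_2_eq_zero)
        then show ?thesis using ij True unfolding V_def by auto
      next
        case False
        have "i div 2 < k" "j div 2 < k" using ij by auto
        then have "S (i div 2) \<inter> S (j div 2) = {}" using S(2) False unfolding PS_def by blast
        then show ?thesis using ij unfolding V_def by auto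
      qed
    next
      fix i assume "i < k"
      then have "S i \<noteq> {}" using S(2) unfolding PS_def by blast
      moreover have "V (2*i) \<union> V (2*i+1) = S i" using V2[OF \<open>i<k\<close>] by auto
      ultimately show "V (2*i) \<union> V (2*i+1) \<noteq> {}" by simp
    qed
    have "FV V = Min ((\<lambda>i. 1 - expansion N ?W (S i)) ` {..<k})"
      unfolding FV_def cmp_img
    proof (intro arg_cong[where f=Min] image_cong refl)
      fix i assume i: "i \<in> {..<k}"
      then have "S i \<subseteq> {0..<N}" "S i \<noteq> {}" using S(2) unfolding PS_def by auto
      then show "bipart_ratio N ?W (V (2*i)) (V (2*i+1)) = 1 - expansion N ?W (S i)"
        using V2[of i] i bip_eq[OF assms(1,3), where S="S i" and m="m i"] m[of i] unfolding C_def by auto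
    qed
    also have "\<dots> = 1 - x" using minmax[OF kI] S(1) unfolding FS_def cmp_img by simp
    finally show ?thesis using PV unfolding B_def mem_Collect_eq by metis
  qed
  have h2: "\<exists>x\<in>A. y \<le> 1 - x" if yB: "y \<in> B" for y
  proof -
    obtain V where V: "y = FV V" "PV V" using yB unfolding B_def by blast
    define S where "S i = V (2*i) \<union> V (2*i+1)" for i
    have PS: "PS S" unfolding PS_def
    proof (intro conjI allI impI)
      fix i assume "i < k"
      then show "S i \<subseteq> {0..<N}" "S i \<noteq> {}" using V(2) unfolding PV_def S_def by auto
    next
      fix i j assume ij: "i < k" "j < k" "i \<noteq> j"
      have d: "V a \<inter> V b = {}" if "a \<in> {2*i, 2*i+1}" "b \<in> {2*j, 2*j+1}" for a b
      proof -
        have "a < 2*k" "b < 2*k" "a \<noteq> b" using ij that by auto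
        then show ?thesis using V(2) unfolding PV_def by blast
      qed
      show "S i \<inter> S j = {}" unfolding S_def using d by blast
    qed
    have "FS S \<in> (\<lambda>i. expansion N ?W (S i)) ` {..<k}"
      unfolding FS_def cmp_img using kI by (intro Max_in) auto
    then obtain i0 where i0: "i0 < k" "FS S = expansion N ?W (S i0)" by auto
    have "y \<le> bipart_ratio N ?W (V (2*i0)) (V (2*i0+1))"
      unfolding V(1) FV_def cmp_img using i0 kI by (intro Min_le) auto
    also have "\<dots> \<le> 1 - expansion N ?W (S i0)" unfolding S_def
      by (rule bip_le[OF assms(1,3)]) (use V(2) i0 in \<open>auto simp: PV_def\<close>)
    finally have "y \<le> 1 - FS S" using i0 by simp
    moreover have "FS S \<in> A" using PS unfolding A_def by blast
    ultimately show ?thesis by blast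
  qed
  have a: "Min A \<in> A" using finA Ane by simp
  then have b1: "1 - Min A \<in> B" by (rule h1)
  then have Bne: "B \<noteq> {}" by blast
  have "1 - Min A \<le> Max B" using b1 finB by simp
  moreover obtain x where "x \<in> A" "Max B \<le> 1 - x" using h2 finB Bne by (meson Max_in)
  moreover have "Min A \<le> x" using \<open>x \<in> A\<close> finA by simp
  ultimately have "Max B = 1 - Min A" by linarith
  then show ?thesis using mA mB by simp
qed

end
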